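(* Let $f=\sum_{U\in\mathbb P}\gamma_U x^U\in\mathbb C\{\{x\}\}_{\mathbb P}$ have radius of convergence $r=\operatorname{rad}(f)>0$ and let $a\in\mathbb C$ with $|a|<r$. For $n\ge0$ let $f_n=\sum_{U\in\mathbb P_n}\gamma_Ux^U$ and let $g_n$ denote $f_n$ written in the basis $\{(x-a)^T:T\in\mathbb P_n\}$. Then for every $T\in\mathbb P$ the sequence $(\langle g_n,(x-a)^T\rangle)_{n\ge0}$ converges in $\mathbb C$, and its limit is $$\gamma_T(a)=\sum_{U\in\mathbb P}\gamma_U\,(U/T)\,a^{\deg(U)-\deg(T)},$$ this series being convergent. The series $f_a:=\sum_{T\in\mathbb P}\gamma_T(a)(x-a)^T\in\mathbb C\{\{x-a\}\}_{\mathbb P}$ (the expansion of $f$ around $a$) has radius of convergence $\operatorname{rad}(f_a)\ge r-|a|$. In particular $\gamma_{\mathbf 1}(a)=\sum_U\gamma_Ua^{\deg U}$ and $\gamma_{|}(a)=\sum_{\deg U\ge1}\gamma_U\deg(U)a^{\deg(U)-1}$.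
   Context: Let $\mathbb P$ denote the set of finite planar reduced rooted trees (rooted trees in which the children of each vertex are linearly ordered and no vertex has exactly one child), including the empty tree $\mathbf 1$ and the one-vertex tree $|$. For $T\in\mathbb P$, $\deg(T)$ is the number of leaves and $L(T)$ its set of leaves; $\mathbb P_n=\{T:\deg T\le n\}$. The algebra $\mathbb C\{x\}_{\mathbb P}$ has basis $\{x^T:T\in\mathbb P\}$, $x^{\mathbf 1}=1$, $x^{|}=x$, with $k$-linear operations $\omega_k$ ($k\ge2$) defined by $\omega_k(x^{T_1},\dots,x^{T_k})=x^T$, $T$ obtained by attaching the nonempty $T_i$ in order as subtrees of the children of a new root (if exactly one $T_i$ is nonempty $T$ is that $T_i$; if all are empty, $T=\mathbf 1$). For $y$ in the algebra, $y^T$ is obtained by iterating these operations along $T$ starting from $y$ (with $y^{\mathbf 1}=1$); in particular $(x-a)^T$. The set $\{(x-a)^T:T\in\mathbb P_n\}$ is a basis of the span $\mathbb C\{x\}_{\le n}$ of $\{x^T:T\in\mathbb P_n\}$. $\mathbb C\{\{x-a\}\}_{\mathbb P}$ is the space of formal series $\sum_T\gamma_T(x-a)^T$ ($\gamma_T\in\mathbb C$), $\langle f,(x-a)^T\rangle$ the coefficient; $\mathbb C\{\{x\}\}_{\mathbb P}$ is the case $a=0$. The radius of convergence of $f=\sum_T\gamma_T(x-a)^T$ is $\operatorname{rad}(f)=\sup\{\rho\ge0:\sum_T|\gamma_T|\rho^{\deg T}<\infty\}\in[0,\infty]$. For $S\in\mathbb P$ and $I\subseteq L(S)$, the contraction $S|I\in\mathbb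 P$ is obtained from the subtree of $S$ consisting of all vertices on paths from the root to leaves in $I$ by suppressing every vertex having exactly one child ($S|\emptyset=\mathbf 1$, $S|I=|$ if $\#I=1$). The planar binomial coefficient is $(S/T)=\#\{I\subseteq L(S):S|I=T\}$. *)

theory Defs
  imports "HOL-Analysis.Analysis"
begin

text \<open>An element of the paper's set P is a value of
type ptree option: None is the empty tree 1, Some Lf is the one-vertex tree.\<close>

datatype ptree = Lf | Nd "ptree list"

fun reduced :: "ptree \<Rightarrow> bool" where
  "reduced Lf = True"
| "reduced (Nd ts) = (2 \<le> length ts \<and> (\<forall>t\<in>set ts. reduced t))"

definition Ptrees :: "ptree option set" where
  "Ptrees = insert None (Some ` {t. reduced t})"

fun nleaves :: "ptree \<Rightarrow> nat" where
  "nleaves Lf = 1"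
| "nleaves (Nd ts) = sum_list (map nleaves ts)"

definition deg :: "ptree option \<Rightarrow> nat" where
  "deg T = (case T of None \<Rightarrow> 0 | Some t \<Rightarrow> nleaves t)"

definition Pn :: "nat \<Rightarrow> ptree option set" where
  "Pn n = {T \<in> Ptrees. deg T \<le> n}"

text \<open>Leaves are identified with indices 0,...,deg T - 1 in left-to-right order.
Contraction S|I: keep the vertices on paths from the root to leaves in I and
suppress every vertex with exactly one child.\<close>

fun contr :: "ptree \<Rightarrow> nat set \<Rightarrow> ptree option"
and contrs :: "ptree list \<Rightarrow> nat set \<Rightarrow> ptree list" where
  "contr Lf I = (if 0 \<in> I then Some Lf else None)"
| "contr (Nd ts) I = (case contrs ts I of [] \<Rightarrow> None | [u] \<Rightarrow> Some u | us \<Rightarrow> Some (Nd us))"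
| "contrs [] I = []"
| "contrs (t # ts) I =
     (case contr t I of None \<Rightarrow> [] | Some u \<Rightarrow> [u]) @ contrs ts {j. j + nleaves t \<in> I}"

definition contraction :: "ptree option \<Rightarrow> nat set \<Rightarrow> ptree option" where
  "contraction S I = (case S of None \<Rightarrow> None | Some s \<Rightarrow> contr s I)"

definition pbinom :: "ptree option \<Rightarrow> ptree option \<Rightarrow> nat" where
  "pbinom S T = card {I. I \<subseteq> {..<deg S} \<and> contraction S I = T}"

text \<open>Elements are represented by their coefficient functions in the basis x^T.\<close>
type_synonym elt = "ptree option \<Rightarrow> complex"

definition mono :: "ptree option \<Rightarrow> elt" where
  "mono T = (\<lambda>U. if U = T then 1 else 0)"

definition supp :: "elt \<Rightarrow> ptree option set" where
  "supp p = {U. p U \<noteq> 0}"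

definition graft :: "ptree option list \<Rightarrow> ptree option" where
  "graft Ts = (case map the (filter (\<lambda>T. T \<noteq> None) Ts) of
                 [] \<Rightarrow> None | [t] \<Rightarrow> Some t | ts \<Rightarrow> Some (Nd ts))"

text \<open>Multilinear extension of omega_k(x^T1,...,x^Tk) = x^(graft [T1,...,Tk]).\<close>
definition omega :: "elt list \<Rightarrow> elt" where
  "omega ps = (\<lambda>T. \<Sum>Ts \<in> {Ts \<in> listset (map supp ps). graft Ts = T}.
                     prod_list (map2 (\<lambda>p U. p U) ps Ts))"

primrec tpow :: "elt \<Rightarrow> ptree \<Rightarrow> elt" where
  "tpow y Lf = y"
| "tpow y (Nd ts) = omega (map (tpow y) ts)"

definition epow :: "elt \<Rightarrow> ptree option \<Rightarrow> elt" where
  "epow y T = (case T of None \<Rightarrow> mono None | Some t \<Rightarrow> tpow y t)"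

definition xminus :: "complex \<Rightarrow> elt" where
  "xminus a = (\<lambda>U. mono (Some Lf) U - a * mono None U)"

definition expand_coeffs :: "complex \<Rightarrow> nat \<Rightarrow> elt \<Rightarrow> ptree option \<Rightarrow> complex" where
  "expand_coeffs a n p = (THE c. (\<forall>T. T \<notin> Pn n \<longrightarrow> c T = 0) \<and>
       (\<forall>U. p U = (\<Sum>T\<in>Pn n. c T * epow (xminus a) T U)))"

text \<open>A formal series sum_T gamma_T (x-a)^T is represented by gamma (values
outside Ptrees are irrelevant).\<close>
definition rad :: "(ptree option \<Rightarrow> complex) \<Rightarrow> ereal" where
  "rad \<gamma> = Sup (ereal ` {\<rho>. 0 \<le> \<rho> \<and> (\<lambda>T. norm (\<gamma> T) * \<rho> ^ deg T) summable_on Ptrees})"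

definition trunc :: "(ptree option \<Rightarrow> complex) \<Rightarrow> nat \<Rightarrow> elt" where
  "trunc \<gamma> n = (\<lambda>U. if U \<in> Pn n then \<gamma> U else 0)"

definition gamma_at :: "(ptree option \<Rightarrow> complex) \<Rightarrow> complex \<Rightarrow> ptree option \<Rightarrow> complex" where
  "gamma_at \<gamma> a T = (\<Sum>\<^sub>\<infinity>U\<in>Ptrees. \<gamma> U * of_nat (pbinom U T) * a ^ (deg U - deg T))"

end

theory Submission
  imports Defs
begin

lemma sum_list_ge_length: "(\<forall>t\<in>set ts. 1 \<le> nleaves t) \<Longrightarrow> length ts \<le> sum_list (map nleaves ts)"
  by (induction ts) fastforce+

lemma nleaves_pos: "reduced t \<Longrightarrow> 1 \<le> nleaves t"
proof (induction t)
  case Lf then show ?case by simp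
next
  case (Nd ts)
  then have "length ts \<le> sum_list (map nleaves ts)" by (intro sum_list_ge_length) auto
  with Nd show ?case by simp
qed

lemma nleaves_Nd_ge2: "reduced (Nd ts) \<Longrightarrow> 2 \<le> nleaves (Nd ts)"
proof -
  assume r: "reduced (Nd ts)"
  then have "length ts \<le> sum_list (map nleaves ts)" by (intro sum_list_ge_length) (use nleaves_pos in fastforce)
  with r show ?thesis by simp
qed

lemma reduced_nleaves1: "reduced t \<Longrightarrow> nleaves t = 1 \<Longrightarrow> t = Lf"
  by (cases t) (use nleaves_Nd_ge2 in fastforce)+

abbreviation N :: "ptree list \<Rightarrow> nat" where "N ts \<equiv> sum_list (map nleaves ts)"

lemma contr_cong:
  "(\<forall>I'. (\<forall>i<nleaves t. i\<in>I \<longleftrightarrow> i\<in>I') \<longrightarrow> contr t I = contr t I')"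
  "(\<forall>I'. (\<forall>i<N ts. i\<in>I \<longleftrightarrow> i\<in>I') \<longrightarrow> contrs ts I = contrs ts I')"
proof (induction t I and ts I rule: contr_contrs.induct)
  case (1 I) then show ?case by simp
next
  case (2 ts I) show ?case
  proof (intro allI impI)
    fix I' assume h: "\<forall>i<nleaves (Nd ts). (i \<in> I) = (i \<in> I')"
    then have "contrs ts I = contrs ts I'" using 2 by simp
    then show "contr (Nd ts) I = contr (Nd ts) I'" by simp
  qed
next
  case (3 I) then show ?case by simp
next
  case (4 t ts I)
  show ?case
  proof (intro allI impI)
    fix I' assume h: "\<forall>i<N (t # ts). (i \<in> I) = (i \<in> I')"
    have a: "contr t I = contr t I'" using 4(1) h by auto
    have b: "contrs ts {j. j + nleaves t \<in> I} = contrs ts {j. j + nleaves t \<in> I'}"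
      using 4(2) h by auto
    show "contrs (t # ts) I = contrs (t # ts) I'" using a b by simp
  qed
qed

lemma contr_reduced:
  "contr t I = Some u \<Longrightarrow> reduced u"
  "\<forall>u\<in>set (contrs ts I). reduced u"
proof (induction t I and ts I arbitrary: u and rule: contr_contrs.induct)
  case (1 I) then show ?case by (simp split: if_splits)
next
  case (2 ts I) then show ?case
    by (auto split: list.splits)
next
  case (3 I) then show ?case by simp
next
  case (4 t ts I)
  then show ?case by (auto split: option.splits)
qed

lemma card_split_shift:
  fixes I :: "nat set"
  shows "card (I \<inter> {..<n + m}) = card (I \<inter> {..<n}) + card ({j. j + n \<in> I} \<inter> {..<m})"
proof -
  have e: "I \<inter> {..<n + m} = (I \<inter> {..<n}) \<union> (\<lambda>j. j + n) ` ({j. j + n \<in> I} \<inter> {..<m})"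
  proof (intro equalityI subsetI)
    fix x assume x: "x \<in> I \<inter> {..<n + m}"
    show "x \<in> (I \<inter> {..<n}) \<union> (\<lambda>j. j + n) ` ({j. j + n \<in> I} \<inter> {..<m})"
    proof (cases "x < n")
      case True then show ?thesis using x by auto
    next
      case False
      then have "x = (x - n) + n" by simp
      moreover have "x - n \<in> {j. j + n \<in> I} \<inter> {..<m}" using x False by auto
      ultimately show ?thesis by blast
    qed
  qed auto
  have "card (I \<inter> {..<n + m}) = card (I \<inter> {..<n}) + card ((\<lambda>j. j + n) ` ({j. j + n \<in> I} \<inter> {..<m}))"
    unfolding e by (rule card_Un_disjoint) auto
  also have "card ((\<lambda>j. j + n) ` ({j. j + n \<in> I} \<inter> {..<m})) = card ({j. j + n \<in> I} \<inter> {..<m})"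
    by (rule card_image) auto
  finally show ?thesis .
qed

lemma contr_deg:
  "deg (contr t I) = card (I \<inter> {..<nleaves t})"
  "N (contrs ts I) = card (I \<inter> {..<N ts})"
proof (induction t I and ts I rule: contr_contrs.induct)
  case (1 I) then show ?case by (simp add: deg_def lessThan_Suc)
next
  case (2 ts I) then show ?case
    by (auto simp: deg_def split: list.splits)
next
  case (3 I) then show ?case by simp
next
  case (4 t ts I)
  have "N (contrs (t # ts) I) = deg (contr t I) + N (contrs ts {j. j + nleaves t \<in> I})"
    by (simp add: deg_def split: option.splits)
  also have "\<dots> = card (I \<inter> {..<nleaves t + N ts})"
    using 4 card_split_shift by simp
  finally show ?case by simp
qed

lemma contr_full:
  "reduced t \<Longrightarrow> (\<forall>i<nleaves t. i\<in>I) \<Longrightarrow> contr t I = Some t"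
  "(\<forall>t\<in>set ts. reduced t) \<Longrightarrow> (\<forall>i<N ts. i\<in>I) \<Longrightarrow> contrs ts I = ts"
proof (induction t I and ts I rule: contr_contrs.induct)
  case (1 I) then show ?case by simp
next
  case (2 ts I)
  then have "contrs ts I = ts" by simp
  with 2(2) show ?case
    by (cases ts rule: remdups_adj.cases) auto
next
  case (3 I) then show ?case by simp
next
  case (4 t ts I)
  then show ?case by simp
qed



definition pl :: "elt list \<Rightarrow> ptree option list \<Rightarrow> complex" where
  "pl ps Ts = prod_list (map2 (\<lambda>p U. p U) ps Ts)"

abbreviation fs :: "elt \<Rightarrow> bool" where "fs p \<equiv> finite (supp p)"

lemma listset_length: "xs \<in> listset As \<Longrightarrow> length xs = length As"
  by (induction As arbitrary: xs) (auto simp: set_Cons_def)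

lemma set_Cons_eq: "set_Cons A B = (\<lambda>(x,xs). x # xs) ` (A \<times> B)"
  by (auto simp: set_Cons_def)

lemma finite_listset: "(\<forall>A\<in>set As. finite A) \<Longrightarrow> finite (listset As)"
  by (induction As) (auto simp: set_Cons_eq)

lemma sum_set_Cons:
  assumes "finite A" "finite B"
  shows "sum f (set_Cons A B) = (\<Sum>x\<in>A. \<Sum>xs\<in>B. f (x # xs))"
proof -
  have "inj_on (\<lambda>(x,xs). x # xs) (A \<times> B)" by (auto simp: inj_on_def)
  then have "sum f (set_Cons A B) = (\<Sum>z\<in>A \<times> B. f ((\<lambda>(x,xs). x # xs) z))"
    unfolding set_Cons_eq using sum.reindex by (simp add: comp_def)
  also have "\<dots> = (\<Sum>x\<in>A. \<Sum>xs\<in>B. f (x # xs))"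
    by (subst sum.cartesian_product) (simp add: case_prod_unfold)
  finally show ?thesis .
qed

lemma sum_listset_append:
  assumes "\<forall>A\<in>set As. finite A" "\<forall>B\<in>set Bs. finite B"
  shows "sum f (listset (As @ Bs)) = (\<Sum>xs\<in>listset As. \<Sum>ys\<in>listset Bs. f (xs @ ys))"
  using assms(1)
proof (induction As arbitrary: f)
  case Nil then show ?case by simp
next
  case (Cons A As)
  have fin: "finite (listset (As @ Bs))" "finite (listset As)"
    using Cons.prems assms(2) by (auto intro!: finite_listset)
  have "sum f (listset ((A # As) @ Bs)) = (\<Sum>x\<in>A. \<Sum>xs\<in>listset (As @ Bs). f (x # xs))"
    using Cons.prems fin by (simp add: sum_set_Cons)
  also have "\<dots> = (\<Sum>x\<in>A. \<Sum>xs\<in>listset As. \<Sum>ys\<in>listset Bs. f (x # xs @ ys))"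
    using Cons by simp
  also have "\<dots> = (\<Sum>xs\<in>listset (A # As). \<Sum>ys\<in>listset Bs. f (xs @ ys))"
    using Cons.prems fin by (simp add: sum_set_Cons)
  finally show ?case .
qed

lemma pl_Cons[simp]: "pl (p # ps) (V # Vs) = p V * pl ps Vs"
  by (simp add: pl_def)

lemma pl_Nil[simp]: "pl [] [] = 1"
  by (simp add: pl_def)

lemma pl_append: "length xs = length ps \<Longrightarrow> pl (ps @ qs) (xs @ ys) = pl ps xs * pl qs ys"
  by (simp add: pl_def)

lemma omega_split:
  assumes "\<forall>q\<in>set ps. fs q" "\<forall>q\<in>set qs. fs q" "finite A" "supp p \<subseteq> A"
  shows "omega (ps @ p # qs) T = (\<Sum>xs\<in>listset (map supp ps). \<Sum>V\<in>A. \<Sum>ys\<in>listset (map supp qs).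
            if graft (xs @ V # ys) = T then pl ps xs * p V * pl qs ys else 0)"
proof -
  have fp: "fs p" using assms(3,4) finite_subset by blast
  have f1: "\<forall>B\<in>set (map supp ps). finite B" "\<forall>B\<in>set (supp p # map supp qs). finite B"
    "\<forall>B\<in>set (map supp qs). finite B"
    using assms fp by auto
  have fin: "finite (listset (map supp (ps @ p # qs)))"
    using f1 by (intro finite_listset) auto
  have "omega (ps @ p # qs) T = (\<Sum>Ts\<in>listset (map supp (ps @ p # qs)).
          if graft Ts = T then pl (ps @ p # qs) Ts else 0)"
    apply (simp only: omega_def pl_def) by (rule sum.inter_filter[OF fin])
  also have "\<dots> = (\<Sum>xs\<in>listset (map supp ps). \<Sum>V\<in>supp p. \<Sum>ys\<in>listset (map supp qs).
            if graft (xs @ V # ys) = T then pl (ps @ p # qs) (xs @ V # ys) else 0)"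
    using f1 by (simp add: sum_listset_append sum_set_Cons finite_listset)
  also have "\<dots> = (\<Sum>xs\<in>listset (map supp ps). \<Sum>V\<in>supp p. \<Sum>ys\<in>listset (map supp qs).
            if graft (xs @ V # ys) = T then pl ps xs * p V * pl qs ys else 0)"
    by (intro sum.cong refl) (simp add: pl_append listset_length)
  also have "\<dots> = (\<Sum>xs\<in>listset (map supp ps). \<Sum>V\<in>A. \<Sum>ys\<in>listset (map supp qs).
            if graft (xs @ V # ys) = T then pl ps xs * p V * pl qs ys else 0)"
    by (intro sum.cong refl sum.mono_neutral_left) (use assms(3,4) in \<open>auto simp: supp_def cong: if_cong\<close>)
  finally show ?thesis .
qed

lemma supp_mono[simp]: "supp (mono V) = {V}"
  by (auto simp: supp_def mono_def)

lemma fs_mono: "fs (mono V)" by simp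

lemma omega_mono_mid:
  assumes "\<forall>q\<in>set ps. fs q" "\<forall>q\<in>set qs. fs q"
  shows "omega (ps @ mono V # qs) T = (\<Sum>xs\<in>listset (map supp ps). \<Sum>ys\<in>listset (map supp qs).
            if graft (xs @ V # ys) = T then pl ps xs * pl qs ys else 0)"
proof -
  have m: "mono V V = 1" by (simp add: mono_def)
  show ?thesis
    using omega_split[OF assms, of "{V}" "mono V" T] by (simp add: m cong: if_cong)
qed

lemma omega_D:
  assumes "\<forall>q\<in>set ps. fs q" "\<forall>q\<in>set qs. fs q" "finite A" "supp p \<subseteq> A"
  shows "omega (ps @ p # qs) T = (\<Sum>V\<in>A. p V * omega (ps @ mono V # qs) T)"
proof -
  have "omega (ps @ p # qs) T = (\<Sum>xs\<in>listset (map supp ps). \<Sum>V\<in>A. \<Sum>ys\<in>listset (map supp qs).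
            if graft (xs @ V # ys) = T then pl ps xs * p V * pl qs ys else 0)"
    by (rule omega_split[OF assms])
  also have "\<dots> = (\<Sum>V\<in>A. \<Sum>xs\<in>listset (map supp ps). \<Sum>ys\<in>listset (map supp qs).
            p V * (if graft (xs @ V # ys) = T then pl ps xs * pl qs ys else 0))"
    by (subst sum.swap) (intro sum.cong refl, auto)
  also have "\<dots> = (\<Sum>V\<in>A. p V * omega (ps @ mono V # qs) T)"
    by (simp add: omega_mono_mid[OF assms(1,2)] sum_distrib_left)
  finally show ?thesis .
qed

lemma supp_lincomb: "supp (\<lambda>U. \<Sum>k\<in>K. c k * q k U) \<subseteq> (\<Union>k\<in>K. supp (q k))"
proof
  fix U assume "U \<in> supp (\<lambda>U. \<Sum>k\<in>K. c k * q k U)"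
  then have "(\<Sum>k\<in>K. c k * q k U) \<noteq> 0" by (simp add: supp_def)
  then obtain k where "k \<in> K" "c k * q k U \<noteq> 0" by (meson sum.neutral)
  then show "U \<in> (\<Union>k\<in>K. supp (q k))" by (auto simp: supp_def)
qed

lemma fs_lincomb: "finite K \<Longrightarrow> \<forall>k\<in>K. fs (q k) \<Longrightarrow> fs (\<lambda>U. \<Sum>k\<in>K. c k * q k U)"
  using supp_lincomb[of c q K] by (rule finite_subset) auto

lemma omega_lin:
  assumes "\<forall>q\<in>set ps. fs q" "\<forall>q\<in>set qs. fs q" "finite K" "\<forall>k\<in>K. fs (q k)"
  shows "omega (ps @ (\<lambda>U. \<Sum>k\<in>K. c k * q k U) # qs) T = (\<Sum>k\<in>K. c k * omega (ps @ q k # qs) T)"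
proof -
  let ?A = "\<Union>k\<in>K. supp (q k)"
  have fA: "finite ?A" using assms by auto
  have "omega (ps @ (\<lambda>U. \<Sum>k\<in>K. c k * q k U) # qs) T
      = (\<Sum>V\<in>?A. (\<Sum>k\<in>K. c k * q k V) * omega (ps @ mono V # qs) T)"
    by (rule omega_D[OF assms(1,2) fA supp_lincomb])
  also have "\<dots> = (\<Sum>k\<in>K. c k * (\<Sum>V\<in>?A. q k V * omega (ps @ mono V # qs) T))"
    by (simp add: sum_distrib_left sum_distrib_right mult.assoc) (rule sum.swap)
  also have "\<dots> = (\<Sum>k\<in>K. c k * omega (ps @ q k # qs) T)"
    using assms by (intro sum.cong refl arg_cong2[where f="(*)"] omega_D[symmetric]) auto
  finally show ?thesis .
qed

lemma graft_None_mid: "graft (xs @ None # ys) = graft (xs @ ys)"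
  by (simp add: graft_def)

lemma omega_drop:
  assumes "\<forall>q\<in>set ps. fs q" "\<forall>q\<in>set qs. fs q"
  shows "omega (ps @ mono None # qs) T = omega (ps @ qs) T"
proof -
  have f1: "\<forall>B\<in>set (map supp ps). finite B" "\<forall>B\<in>set (map supp qs). finite B"
    using assms by auto
  have fin: "finite (listset (map supp (ps @ qs)))"
    using f1 by (intro finite_listset) auto
  have "omega (ps @ qs) T = (\<Sum>Ts\<in>listset (map supp (ps @ qs)).
          if graft Ts = T then pl (ps @ qs) Ts else 0)"
    apply (simp only: omega_def pl_def) by (rule sum.inter_filter[OF fin])
  also have "\<dots> = (\<Sum>xs\<in>listset (map supp ps). \<Sum>ys\<in>listset (map supp qs).
            if graft (xs @ ys) = T then pl (ps @ qs) (xs @ ys) else 0)"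
    using f1 by (simp add: sum_listset_append)
  also have "\<dots> = (\<Sum>xs\<in>listset (map supp ps). \<Sum>ys\<in>listset (map supp qs).
            if graft (xs @ None # ys) = T then pl ps xs * pl qs ys else 0)"
    by (intro sum.cong refl) (simp add: graft_None_mid pl_append listset_length cong: if_cong)
  also have "\<dots> = omega (ps @ mono None # qs) T"
    by (rule omega_mono_mid[OF assms, symmetric])
  finally show ?thesis by simp
qed

lemma graft_single[simp]: "graft [V] = V"
  by (cases V) (auto simp: graft_def)

lemma omega_single: "fs p \<Longrightarrow> omega [p] = p"
proof
  fix T assume fp: "fs p"
  have "omega [p] T = omega ([] @ p # []) T" by simp
  also have "\<dots> = (\<Sum>xs\<in>listset (map supp []). \<Sum>V\<in>supp p. \<Sum>ys\<in>listset (map supp []).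
            if graft (xs @ V # ys) = T then pl [] xs * p V * pl [] ys else 0)"
    by (rule omega_split) (use fp in auto)
  also have "\<dots> = (\<Sum>V\<in>supp p. if V = T then p V else 0)"
    by (simp cong: if_cong)
  also have "\<dots> = p T"
    using fp by (auto simp: sum.delta' supp_def)
  finally show "omega [p] T = p T" .
qed

lemma omega_nil: "omega [] = mono None"
proof
  fix T
  have "{Ts \<in> listset (map supp []). graft Ts = T} = (if T = None then {[]} else {})"
    by (auto simp: graft_def)
  then show "omega [] T = mono None T"
    unfolding omega_def by (simp add: mono_def)
qed

lemma listset_singletons: "listset (map (\<lambda>V. {V}) Vs) = {Vs}"
  by (induction Vs) (auto simp: set_Cons_def)

lemma omega_monos: "omega (map mono Vs) = mono (graft Vs)"
proof
  fix T
  have "map supp (map mono Vs) = map (\<lambda>V. {V}) Vs" by simp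
  moreover have "prod_list (map2 (\<lambda>p U. p U) (map mono Vs) Vs) = 1"
    by (induction Vs) (auto simp: mono_def)
  ultimately have "{Ts \<in> listset (map supp (map mono Vs)). graft Ts = T} = (if graft Vs = T then {Vs} else {})"
    by (simp only: listset_singletons) auto
  then show "omega (map mono Vs) T = mono (graft Vs) T"
    unfolding omega_def using \<open>prod_list (map2 (\<lambda>p U. p U) (map mono Vs) Vs) = 1\<close>
    by (simp add: mono_def)
qed

lemma fs_omega: "\<forall>p\<in>set ps. fs p \<Longrightarrow> fs (omega ps)"
proof -
  assume a: "\<forall>p\<in>set ps. fs p"
  have "supp (omega ps) \<subseteq> graft ` listset (map supp ps)"
  proof
    fix T assume "T \<in> supp (omega ps)"
    then have "(\<Sum>Ts\<in>{Ts \<in> listset (map supp ps). graft Ts = T}. prod_list (map2 (\<lambda>p U. p U) ps Ts)) \<noteq> 0"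
      by (simp add: supp_def omega_def)
    then obtain Ts where "Ts \<in> {Ts \<in> listset (map supp ps). graft Ts = T}"
      by (meson sum.neutral)
    then show "T \<in> graft ` listset (map supp ps)" by blast
  qed
  moreover have "finite (listset (map supp ps))" using a by (intro finite_listset) auto
  ultimately show ?thesis by (meson finite_imageI finite_subset)
qed

lemma fs_tpow: "fs y \<Longrightarrow> fs (tpow y t)"
  by (induction t) (auto intro!: fs_omega)

lemma fs_epow: "fs y \<Longrightarrow> fs (epow y T)"
  by (cases T) (auto simp: epow_def fs_tpow)



lemma sum_Pow_split:
  "(\<Sum>I\<in>Pow {..<n+m}. G I) = (\<Sum>J\<in>Pow {..<n::nat}. \<Sum>I'\<in>Pow {..<m}. G (J \<union> (\<lambda>k. k+n) ` I'))"
proof -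
  have "(\<Sum>I\<in>Pow {..<n+m}. G I) = (\<Sum>JI\<in>Pow {..<n} \<times> Pow {..<m}. G (fst JI \<union> (\<lambda>k. k+n) ` snd JI))"
  proof (rule sum.reindex_bij_witness[where j = "\<lambda>I. (I \<inter> {..<n}, {k. k + n \<in> I})"
        and i = "\<lambda>JI. fst JI \<union> (\<lambda>k. k+n) ` snd JI"])
    fix I assume I: "I \<in> Pow {..<n+m}"
    show "fst (I \<inter> {..<n}, {k. k + n \<in> I}) \<union> (\<lambda>k. k + n) ` snd (I \<inter> {..<n}, {k. k + n \<in> I}) = I"
    proof (intro equalityI subsetI)
      fix x assume "x \<in> I"
      then show "x \<in> fst (I \<inter> {..<n}, {k. k + n \<in> I}) \<union> (\<lambda>k. k + n) ` snd (I \<inter> {..<n}, {k. k + n \<in> I})"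
      proof (cases "x < n")
        case False
        then have "x = (x - n) + n" by simp
        with \<open>x \<in> I\<close> have "x \<in> (\<lambda>k. k+n) ` {k. k + n \<in> I}"
          by (intro image_eqI[of _ _ "x-n"]) auto
        then show ?thesis by simp
      qed auto
    qed auto
    show "(I \<inter> {..<n}, {k. k + n \<in> I}) \<in> Pow {..<n} \<times> Pow {..<m}"
      using I by auto
    show "G (fst (I \<inter> {..<n}, {k. k + n \<in> I}) \<union> (\<lambda>k. k + n) ` snd (I \<inter> {..<n}, {k. k + n \<in> I})) = G I"
      using \<open>fst (I \<inter> {..<n}, {k. k + n \<in> I}) \<union> (\<lambda>k. k + n) ` snd (I \<inter> {..<n}, {k. k + n \<in> I}) = I\<close> by simp
  next
    fix JI assume JI: "JI \<in> Pow {..<n} \<times> Pow {..<m}"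
    obtain J I' where e: "JI = (J, I')" by force
    with JI have J: "J \<subseteq> {..<n}" "I' \<subseteq> {..<m}" by auto
    have "(J \<union> (\<lambda>k. k + n) ` I') \<inter> {..<n} = J" using J by auto
    moreover have "{k. k + n \<in> J \<union> (\<lambda>k. k + n) ` I'} = I'" using J by auto
    ultimately show "((fst JI \<union> (\<lambda>k. k + n) ` snd JI) \<inter> {..<n}, {k. k + n \<in> fst JI \<union> (\<lambda>k. k + n) ` snd JI}) = JI"
      using e by simp
    show "fst JI \<union> (\<lambda>k. k + n) ` snd JI \<in> Pow {..<n + m}" using J e by auto
  qed
  also have "\<dots> = (\<Sum>J\<in>Pow {..<n::nat}. \<Sum>I'\<in>Pow {..<m}. G (J \<union> (\<lambda>k. k+n) ` I'))"
    by (simp add: sum.cartesian_product case_prod_unfold)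
  finally show ?thesis .
qed

lemma card_shift_union:
  assumes "J \<subseteq> {..<n::nat}" "finite I'"
  shows "card (J \<union> (\<lambda>k. k+n) ` I') = card J + card I'"
proof -
  have fJ: "finite J" using assms finite_subset by blast
  have "card (J \<union> (\<lambda>k. k+n) ` I') = card J + card ((\<lambda>k. k+n) ` I')"
    using assms fJ by (intro card_Un_disjoint) auto
  also have "card ((\<lambda>k. k+n) ` I') = card I'" by (rule card_image) auto
  finally show ?thesis .
qed

lemma omega_epow_mid:
  assumes "fs y" "\<forall>q\<in>set ps. fs q" "\<forall>q\<in>set qs. fs q"
  shows "omega (ps @ epow y W # qs) = omega (ps @ map (tpow y) (case W of None \<Rightarrow> [] | Some u \<Rightarrow> [u]) @ qs)"
proof (cases W)
  case None
  then show ?thesis using omega_drop[OF assms(2,3)] by (auto simp: epow_def)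
qed (simp add: epow_def)

lemma omega_tpow_list:
  assumes "fs y"
  shows "omega (map (tpow y) us) = epow y (case us of [] \<Rightarrow> None | [u] \<Rightarrow> Some u | us \<Rightarrow> Some (Nd us))"
proof (cases us rule: remdups_adj.cases)
  case 1 then show ?thesis by (simp add: omega_nil epow_def)
next
  case (2 u) then show ?thesis by (simp add: omega_single fs_tpow assms epow_def)
next
  case (3 u v us) then show ?thesis by (simp add: epow_def)
qed

context
  fixes y :: elt and a :: complex
  assumes fy: "fs y"
begin

abbreviation z where "z \<equiv> (\<lambda>V. y V + a * mono None V)"

lemma fz: "fs z"
proof -
  have "supp z \<subseteq> supp y \<union> {None}" by (auto simp: supp_def mono_def)
  then show ?thesis using fy finite_subset by auto
qed

lemma list_expand:
  assumes IH: "\<forall>t\<in>set ts. tpow z t = (\<lambda>V. \<Sum>I\<in>Pow {..<nleaves t}. a^(nleaves t - card I) * epow y (contr t I) V)"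
  shows "\<forall>ps. (\<forall>p\<in>set ps. fs p) \<longrightarrow> omega (ps @ map (tpow z) ts) =
     (\<lambda>V. \<Sum>I\<in>Pow {..<N ts}. a^(N ts - card I) * omega (ps @ map (tpow y) (contrs ts I)) V)"
  using IH
proof (induction ts)
  case Nil then show ?case by simp
next
  case (Cons t ts)
  show ?case
  proof (intro allI impI ext)
    fix ps V assume fps: "\<forall>p\<in>set ps. fs p"
    let ?n = "nleaves t" and ?m = "N ts"
    let ?R = "\<lambda>I'. map (tpow y) (contrs ts I')"
    have fR: "\<forall>q\<in>set (?R I'). fs q" for I' using fs_tpow fy by auto
    have fps': "\<forall>p\<in>set (ps @ [tpow z t]). fs p" using fps fs_tpow fz by auto
    have IHt: "tpow z t = (\<lambda>V. \<Sum>J\<in>Pow {..<?n}. a^(?n - card J) * epow y (contr t J) V)"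
      using Cons.prems by simp
    have IHts: "\<forall>ps. (\<forall>p\<in>set ps. fs p) \<longrightarrow> omega (ps @ map (tpow z) ts) =
     (\<lambda>V. \<Sum>I\<in>Pow {..<N ts}. a^(N ts - card I) * omega (ps @ map (tpow y) (contrs ts I)) V)"
      using Cons.IH Cons.prems by simp
    have eq: "omega ((ps @ [tpow z t]) @ map (tpow z) ts) =
     (\<lambda>V. \<Sum>I\<in>Pow {..<N ts}. a^(N ts - card I) * omega ((ps @ [tpow z t]) @ map (tpow y) (contrs ts I)) V)"
      using IHts fps' by blast
    have "omega (ps @ map (tpow z) (t # ts)) V = omega ((ps @ [tpow z t]) @ map (tpow z) ts) V"
      by simp
    also have "\<dots> = (\<Sum>I'\<in>Pow {..<?m}. a^(?m - card I') * omega ((ps @ [tpow z t]) @ ?R I') V)"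
      using fun_cong[OF eq, of V] by simp
    also have "\<dots> = (\<Sum>I'\<in>Pow {..<?m}. a^(?m - card I') *
        (\<Sum>J\<in>Pow {..<?n}. a^(?n - card J) * omega (ps @ epow y (contr t J) # ?R I') V))"
    proof (intro sum.cong refl arg_cong2[where f="(*)"])
      fix I'
      have "omega ((ps @ [tpow z t]) @ ?R I') V = omega (ps @ tpow z t # ?R I') V" by simp
      also have "\<dots> = (\<Sum>J\<in>Pow {..<?n}. a^(?n - card J) * omega (ps @ epow y (contr t J) # ?R I') V)"
        unfolding IHt using fps fR fy by (intro omega_lin) (auto intro: fs_epow)
      finally show "omega ((ps @ [tpow z t]) @ ?R I') V = (\<Sum>J\<in>Pow {..<?n}. a^(?n - card J) * omega (ps @ epow y (contr t J) # ?R I') V)" .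
    qed
    also have "\<dots> = (\<Sum>J\<in>Pow {..<?n}. \<Sum>I'\<in>Pow {..<?m}. a^(?m - card I') * a^(?n - card J) *
        omega (ps @ map (tpow y) ((case contr t J of None \<Rightarrow> [] | Some u \<Rightarrow> [u]) @ contrs ts I')) V)"
    proof -
      have e: "omega (ps @ epow y (contr t J) # ?R I') V =
        omega (ps @ map (tpow y) ((case contr t J of None \<Rightarrow> [] | Some u \<Rightarrow> [u]) @ contrs ts I')) V" for J I'
        using omega_epow_mid[OF fy fps fR, of "contr t J" I'] by simp
      have "(\<Sum>I'\<in>Pow {..<?m}. a^(?m - card I') *
        (\<Sum>J\<in>Pow {..<?n}. a^(?n - card J) * omega (ps @ epow y (contr t J) # ?R I') V))
        = (\<Sum>I'\<in>Pow {..<?m}. \<Sum>J\<in>Pow {..<?n}. a^(?m - card I') * a^(?n - card J) *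
        omega (ps @ map (tpow y) ((case contr t J of None \<Rightarrow> [] | Some u \<Rightarrow> [u]) @ contrs ts I')) V)"
        by (simp only: sum_distrib_left e mult.assoc)
      also have "\<dots> = (\<Sum>J\<in>Pow {..<?n}. \<Sum>I'\<in>Pow {..<?m}. a^(?m - card I') * a^(?n - card J) *
        omega (ps @ map (tpow y) ((case contr t J of None \<Rightarrow> [] | Some u \<Rightarrow> [u]) @ contrs ts I')) V)"
        by (rule sum.swap)
      finally show ?thesis .
    qed
    also have "\<dots> = (\<Sum>I\<in>Pow {..<?n + ?m}. a^(?n + ?m - card I) *
        omega (ps @ map (tpow y) (contrs (t # ts) I)) V)"
    proof (subst sum_Pow_split, intro sum.cong refl)
      fix J I' assume J: "J \<in> Pow {..<?n}" and I': "I' \<in> Pow {..<?m}"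
      let ?I = "J \<union> (\<lambda>k. k + ?n) ` I'"
      have "\<forall>i<?n. (i \<in> J) = (i \<in> ?I)" by auto
      then have c1: "contr t ?I = contr t J"
        using contr_cong(1)[of t J] by metis
      have c2: "{j. j + ?n \<in> ?I} = I'" using J by auto
      have cJ: "card J \<le> ?n" using J by (metis PowD card_lessThan card_mono finite_lessThan)
      have cI: "card I' \<le> ?m" using I' by (metis PowD card_lessThan card_mono finite_lessThan)
      have fI': "finite I'" using I' finite_subset by auto
      have cc: "card ?I = card J + card I'" using J fI' by (intro card_shift_union) auto
      have ex: "a^(?n + ?m - card ?I) = a^(?m - card I') * a^(?n - card J)"
      proof -
        have "?n + ?m - card ?I = (?m - card I') + (?n - card J)" using cJ cI cc by simp
        then show ?thesis by (simp add: power_add)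
      qed
      show "a^(?m - card I') * a^(?n - card J) *
        omega (ps @ map (tpow y) ((case contr t J of None \<Rightarrow> [] | Some u \<Rightarrow> [u]) @ contrs ts I')) V =
        a^(?n + ?m - card ?I) * omega (ps @ map (tpow y) (contrs (t # ts) ?I)) V"
        by (simp only: ex c1 c2 contrs.simps mult.commute)
    qed
    also have "\<dots> = (\<Sum>I\<in>Pow {..<N (t # ts)}. a^(N (t # ts) - card I) *
        omega (ps @ map (tpow y) (contrs (t # ts) I)) V)"
      by simp
    finally show "omega (ps @ map (tpow z) (t # ts)) V = (\<Sum>I\<in>Pow {..<N (t # ts)}. a^(N (t # ts) - card I) *
        omega (ps @ map (tpow y) (contrs (t # ts) I)) V)" .
  qed
qed

lemma tpow_expand:
  "tpow z t = (\<lambda>V. \<Sum>I\<in>Pow {..<nleaves t}. a^(nleaves t - card I) * epow y (contr t I) V)"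
proof (induction t)
  case Lf
  have P: "Pow {..<Suc 0} = {{}, {0}}" by (auto simp: lessThan_Suc)
  show ?case
    by (rule ext) (simp add: P epow_def)
next
  case (Nd ts)
  have "tpow z (Nd ts) = omega ([] @ map (tpow z) ts)" by simp
  also have "\<dots> = (\<lambda>V. \<Sum>I\<in>Pow {..<N ts}. a^(N ts - card I) * omega ([] @ map (tpow y) (contrs ts I)) V)"
  proof -
    have h: "\<forall>t\<in>set ts. tpow z t = (\<lambda>V. \<Sum>I\<in>Pow {..<nleaves t}. a^(nleaves t - card I) * epow y (contr t I) V)"
      using Nd by simp
    show ?thesis using spec[OF list_expand[OF h], of "[]"] by simp
  qed
  also have "\<dots> = (\<lambda>V. \<Sum>I\<in>Pow {..<nleaves (Nd ts)}. a^(nleaves (Nd ts) - card I) * epow y (contr (Nd ts) I) V)"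
    by (simp add: omega_tpow_list[OF fy])
  finally show ?case .
qed

end



abbreviation xx :: elt where "xx \<equiv> mono (Some Lf)"

lemma tpow_x: "reduced t \<Longrightarrow> tpow xx t = mono (Some t)"
proof (induction t)
  case Lf then show ?case by simp
next
  case (Nd ts)
  then have "map (tpow xx) ts = map mono (map Some ts)" by auto
  then have "tpow xx (Nd ts) = omega (map mono (map Some ts))" by (simp only: tpow.simps)
  also have "\<dots> = mono (graft (map Some ts))" by (rule omega_monos)
  finally have "tpow xx (Nd ts) = mono (graft (map Some ts))" .
  moreover have "graft (map Some ts) = Some (Nd ts)"
    using Nd.prems by (cases ts rule: remdups_adj.cases) (auto simp: graft_def comp_def)
  ultimately show ?case by simp
qed

lemma Ptrees_Some: "Some t \<in> Ptrees \<longleftrightarrow> reduced t"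
  by (auto simp: Ptrees_def)

lemma epow_x: "T \<in> Ptrees \<Longrightarrow> epow xx T = mono T"
  by (cases T) (auto simp: epow_def Ptrees_Some tpow_x)

lemma contraction_Ptrees: "contraction T I \<in> Ptrees"
proof (cases T)
  case None then show ?thesis by (simp add: contraction_def Ptrees_def)
next
  case (Some t)
  show ?thesis
  proof (cases "contr t I")
    case None then show ?thesis using Some by (simp add: contraction_def Ptrees_def)
  next
    case (Some u)
    then have "reduced u" by (rule contr_reduced(1))
    then show ?thesis using Some \<open>T = Some t\<close> by (simp add: contraction_def Ptrees_Some)
  qed
qed

lemma deg_contraction: "I \<subseteq> {..<deg T} \<Longrightarrow> deg (contraction T I) = card I"
proof (cases T)
  case None
  assume "I \<subseteq> {..<deg T}"
  then show ?thesis using None by (simp add: deg_def contraction_def)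
next
  case (Some t)
  assume "I \<subseteq> {..<deg T}"
  then have "I \<inter> {..<nleaves t} = I" using Some by (auto simp: deg_def)
  then show ?thesis using Some contr_deg(1)[of t I] by (simp add: contraction_def)
qed

lemma contraction_full: "T \<in> Ptrees \<Longrightarrow> contraction T {..<deg T} = T"
  by (cases T) (auto simp: contraction_def deg_def Ptrees_Some contr_full)

lemma deg_Ptrees_pos: "T \<in> Ptrees \<Longrightarrow> T \<noteq> None \<Longrightarrow> 1 \<le> deg T"
  by (cases T) (auto simp: deg_def Ptrees_Some dest: nleaves_pos)

lemma deg_Ptrees_1: "T \<in> Ptrees \<Longrightarrow> deg T = 1 \<longleftrightarrow> T = Some Lf"
  by (cases T) (auto simp: deg_def Ptrees_Some reduced_nleaves1)

lemma fs_xminus: "fs (xminus a)"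
proof -
  have "supp (xminus a) \<subseteq> {Some Lf, None}" by (auto simp: supp_def xminus_def mono_def)
  then show ?thesis using finite_subset by auto
qed

lemma epow_expand:
  assumes "fs y"
  shows "epow (\<lambda>V. y V + a * mono None V) T =
     (\<lambda>V. \<Sum>I\<in>Pow {..<deg T}. a^(deg T - card I) * epow y (contraction T I) V)"
proof (cases T)
  case None
  then show ?thesis by (simp add: epow_def deg_def contraction_def)
next
  case (Some t)
  then show ?thesis using tpow_expand[OF assms, of a t] by (simp add: epow_def deg_def contraction_def)
qed

lemma x_in_xminus:
  assumes "U \<in> Ptrees"
  shows "mono U = (\<lambda>V. \<Sum>I\<in>Pow {..<deg U}. a^(deg U - card I) * epow (xminus a) (contraction U I) V)"
proof -
  have "(\<lambda>V. xminus a V + a * mono None V) = xx" by (auto simp: xminus_def)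
  then show ?thesis using epow_expand[OF fs_xminus, of a a U] epow_x[OF assms] by simp
qed

lemma xminus_in_x:
  assumes "T \<in> Ptrees"
  shows "epow (xminus a) T = (\<lambda>V. \<Sum>I\<in>Pow {..<deg T}. (-a)^(deg T - card I) * mono (contraction T I) V)"
proof -
  have "(\<lambda>V. xx V + (-a) * mono None V) = xminus a" by (auto simp: xminus_def)
  moreover have "fs xx" by simp
  ultimately show ?thesis using epow_expand[of xx "-a" T] epow_x[OF contraction_Ptrees] by simp
qed

lemma card_le_lessThan: "I \<subseteq> {..<n::nat} \<Longrightarrow> card I \<le> n"
  by (metis card_lessThan card_mono finite_lessThan)

lemma subset_card_eq_lessThan: "I \<subseteq> {..<n::nat} \<Longrightarrow> n \<le> card I \<Longrightarrow> I = {..<n}"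
  by (metis card_lessThan card_seteq finite_lessThan)

lemma triangular:
  assumes T: "T \<in> Ptrees" and S: "S \<in> Ptrees" and d: "deg T \<le> deg S"
  shows "epow (xminus a) T S = (if T = S then 1 else 0)"
proof -
  have "epow (xminus a) T S = (\<Sum>I\<in>Pow {..<deg T}. (-a)^(deg T - card I) * mono (contraction T I) S)"
    using xminus_in_x[OF T] by simp
  also have "\<dots> = (\<Sum>I\<in>Pow {..<deg T}. if I = {..<deg T} \<and> T = S then 1 else 0)"
  proof (intro sum.cong refl)
    fix I assume I: "I \<in> Pow {..<deg T}"
    show "(-a)^(deg T - card I) * mono (contraction T I) S = (if I = {..<deg T} \<and> T = S then 1 else 0)"
    proof (cases "contraction T I = S")
      case True
      then have "card I = deg S" using deg_contraction I by auto
      then have "I = {..<deg T}" using I d subset_card_eq_lessThan by auto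
      then show ?thesis using True contraction_full[OF T] by (simp add: mono_def)
    next
      case False
      then have "\<not> (I = {..<deg T} \<and> T = S)" using contraction_full[OF T] by auto
      then show ?thesis using False by (simp add: mono_def)
    qed
  qed
  also have "\<dots> = (if T = S then 1 else 0)"
    by (simp add: sum.delta')
  finally show ?thesis .
qed

lemma nleaves_child_less:
  assumes "t \<in> set ts" "\<forall>s\<in>set ts. 1 \<le> nleaves s" "2 \<le> length ts"
  shows "nleaves t < N ts"
proof -
  have "N ts = nleaves t + N (remove1 t ts)" using assms(1) by (rule sum_list_map_remove1)
  moreover have "length (remove1 t ts) \<le> N (remove1 t ts)"
    using assms(2) by (intro sum_list_ge_length) (meson notin_set_remove1)
  moreover have "length (remove1 t ts) = length ts - 1" using assms(1) by (simp add: length_remove1)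
  ultimately show ?thesis using assms(3) by linarith
qed

lemma finite_reduced: "finite {t. reduced t \<and> nleaves t \<le> n}"
proof (induction n)
  case 0
  have "\<forall>t. reduced t \<longrightarrow> 1 \<le> nleaves t" using nleaves_pos by blast
  then have B: "{t. reduced t \<and> nleaves t \<le> 0} = {}" by fastforce
  show ?case unfolding B by simp
next
  case (Suc n)
  let ?R = "{t. reduced t \<and> nleaves t \<le> n}"
  have "{t. reduced t \<and> nleaves t \<le> Suc n} \<subseteq> insert Lf (Nd ` {ts. set ts \<subseteq> ?R \<and> length ts \<le> Suc n})"
  proof
    fix t assume t: "t \<in> {t. reduced t \<and> nleaves t \<le> Suc n}"
    show "t \<in> insert Lf (Nd ` {ts. set ts \<subseteq> ?R \<and> length ts \<le> Suc n})"
    proof (cases t)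
      case (Nd ts)
      have r: "\<forall>s\<in>set ts. 1 \<le> nleaves s" "2 \<le> length ts" "\<forall>s\<in>set ts. reduced s"
        using t Nd nleaves_pos by auto
      have "length ts \<le> N ts" using r by (intro sum_list_ge_length) auto
      moreover have "set ts \<subseteq> ?R"
        using nleaves_child_less[OF _ r(1,2)] r(3) t Nd by fastforce
      ultimately show ?thesis using t Nd by auto
    qed simp
  qed
  moreover have "finite (insert Lf (Nd ` {ts. set ts \<subseteq> ?R \<and> length ts \<le> Suc n}))"
    using Suc finite_lists_length_le by blast
  ultimately show ?case using finite_subset by blast
qed

lemma finite_Pn: "finite (Pn n)"
proof -
  have "Pn n \<subseteq> insert None (Some ` {t. reduced t \<and> nleaves t \<le> n})"
    by (auto simp: Pn_def Ptrees_def deg_def)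
  then show ?thesis using finite_reduced finite_subset by blast
qed

lemma Pn_sub: "Pn n \<subseteq> Ptrees" by (auto simp: Pn_def)

lemma pbinom_group:
  assumes U: "U \<in> Ptrees" and P: "finite P" "contraction U ` Pow {..<deg U} \<subseteq> P"
  shows "(\<Sum>T\<in>P. of_nat (pbinom U T) * F T) = (\<Sum>I\<in>Pow {..<deg U}. (F (contraction U I) :: 'b::comm_semiring_1))"
proof -
  have "(\<Sum>I\<in>Pow {..<deg U}. F (contraction U I)) =
      (\<Sum>T\<in>P. \<Sum>I\<in>{I. I \<in> Pow {..<deg U} \<and> contraction U I = T}. F (contraction U I))"
    using P by (intro sum.group[symmetric]) auto
  also have "\<dots> = (\<Sum>T\<in>P. of_nat (pbinom U T) * F T)"
  proof (intro sum.cong refl)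
    fix T
    have "(\<Sum>I\<in>{I. I \<in> Pow {..<deg U} \<and> contraction U I = T}. F (contraction U I))
        = (\<Sum>I\<in>{I. I \<in> Pow {..<deg U} \<and> contraction U I = T}. F T)" by (rule sum.cong) auto
    also have "\<dots> = of_nat (pbinom U T) * F T"
      by (simp add: pbinom_def)
    finally show "(\<Sum>I\<in>{I. I \<in> Pow {..<deg U} \<and> contraction U I = T}. F (contraction U I)) = of_nat (pbinom U T) * F T" .
  qed
  finally show ?thesis by simp
qed

lemma contraction_Pn: "U \<in> Pn n \<Longrightarrow> contraction U ` Pow {..<deg U} \<subseteq> Pn n"
proof
  fix T assume U: "U \<in> Pn n" and "T \<in> contraction U ` Pow {..<deg U}"
  then obtain I where I: "I \<subseteq> {..<deg U}" "T = contraction U I" by auto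
  then have "deg T = card I" using deg_contraction by simp
  also have "\<dots> \<le> deg U" using I card_le_lessThan by simp
  also have "\<dots> \<le> n" using U by (simp add: Pn_def)
  finally show "T \<in> Pn n" using I contraction_Ptrees by (simp add: Pn_def)
qed

definition c0 :: "(ptree option \<Rightarrow> complex) \<Rightarrow> complex \<Rightarrow> nat \<Rightarrow> ptree option \<Rightarrow> complex" where
  "c0 \<gamma> a n T = (if T \<in> Pn n then \<Sum>U\<in>Pn n. \<gamma> U * of_nat (pbinom U T) * a ^ (deg U - deg T) else 0)"

lemma c0_works:
  "trunc \<gamma> n U = (\<Sum>T\<in>Pn n. c0 \<gamma> a n T * epow (xminus a) T U)"
proof -
  have "(\<Sum>T\<in>Pn n. c0 \<gamma> a n T * epow (xminus a) T U)
     = (\<Sum>T\<in>Pn n. \<Sum>U'\<in>Pn n. \<gamma> U' * (of_nat (pbinom U' T) * (a ^ (deg U' - deg T) * epow (xminus a) T U)))"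
    by (simp add: c0_def sum_distrib_right mult.assoc)
  also have "\<dots> = (\<Sum>U'\<in>Pn n. \<gamma> U' * (\<Sum>T\<in>Pn n. of_nat (pbinom U' T) * (a ^ (deg U' - deg T) * epow (xminus a) T U)))"
    by (subst sum.swap) (simp add: sum_distrib_left)
  also have "\<dots> = (\<Sum>U'\<in>Pn n. \<gamma> U' * mono U' U)"
  proof (intro sum.cong refl arg_cong2[where f="(*)"])
    fix U' assume U': "U' \<in> Pn n"
    then have U'P: "U' \<in> Ptrees" by (simp add: Pn_def)
    have "(\<Sum>T\<in>Pn n. of_nat (pbinom U' T) * (a ^ (deg U' - deg T) * epow (xminus a) T U))
        = (\<Sum>I\<in>Pow {..<deg U'}. a ^ (deg U' - deg (contraction U' I)) * epow (xminus a) (contraction U' I) U)"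
      by (rule pbinom_group[OF U'P finite_Pn contraction_Pn[OF U']])
    also have "\<dots> = (\<Sum>I\<in>Pow {..<deg U'}. a ^ (deg U' - card I) * epow (xminus a) (contraction U' I) U)"
      by (intro sum.cong refl) (simp add: deg_contraction)
    also have "\<dots> = mono U' U"
      using fun_cong[OF x_in_xminus[OF U'P, of a], of U] by simp
    finally show "(\<Sum>T\<in>Pn n. of_nat (pbinom U' T) * (a ^ (deg U' - deg T) * epow (xminus a) T U)) = mono U' U" .
  qed
  also have "\<dots> = (\<Sum>U'\<in>Pn n. if U' = U then \<gamma> U else 0)"
    by (intro sum.cong refl) (auto simp: mono_def)
  also have "\<dots> = trunc \<gamma> n U"
    by (simp add: trunc_def sum.delta finite_Pn)
  finally show ?thesis by simp
qed

lemma unique_coeffs: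
  assumes d0: "\<forall>T. T \<notin> Pn n \<longrightarrow> d T = 0"
    and dsum: "\<forall>U. (\<Sum>T\<in>Pn n. d T * epow (xminus a) T U) = 0"
  shows "d = (\<lambda>_. 0)"
proof (rule ccontr)
  assume "d \<noteq> (\<lambda>_. 0)"
  then obtain T1 where "d T1 \<noteq> 0" by auto
  let ?S = "{T \<in> Pn n. d T \<noteq> 0}"
  have T1S: "T1 \<in> ?S" using \<open>d T1 \<noteq> 0\<close> d0 by auto
  have fS: "finite ?S" by (rule finite_subset[OF _ finite_Pn[of n]]) auto
  let ?M = "Max (deg ` ?S)"
  obtain T0 where T0: "T0 \<in> ?S" "deg T0 = ?M"
  proof -
    have "?M \<in> deg ` ?S" using fS T1S by (intro Max_in) auto
    then obtain T0' where "T0' \<in> ?S" "?M = deg T0'" by (rule imageE)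
    then show ?thesis by (intro that) auto
  qed
  have maxd: "\<And>T. T \<in> ?S \<Longrightarrow> deg T \<le> deg T0"
  proof -
    fix T assume "T \<in> ?S"
    then have "deg T \<le> ?M" using fS by (intro Max_ge) auto
    then show "deg T \<le> deg T0" using T0(2) by simp
  qed
  have T0P: "T0 \<in> Ptrees" using T0 Pn_sub by auto
  have "(\<Sum>T\<in>Pn n. d T * epow (xminus a) T T0) = (\<Sum>T\<in>Pn n. if T = T0 then d T0 else 0)"
  proof (intro sum.cong refl)
    fix T assume T: "T \<in> Pn n"
    show "d T * epow (xminus a) T T0 = (if T = T0 then d T0 else 0)"
    proof (cases "d T = 0")
      case False
      then have "deg T \<le> deg T0" using maxd T by auto
      moreover have "T \<in> Ptrees" using T Pn_sub by auto
      ultimately show ?thesis using triangular[OF _ T0P, of T a] by simp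
    qed auto
  qed
  also have "\<dots> = d T0" using T0 by (simp add: sum.delta' finite_Pn)
  finally show False using dsum T0 by auto
qed

lemma expand_coeffs_eq: "expand_coeffs a n (trunc \<gamma> n) = c0 \<gamma> a n"
  unfolding expand_coeffs_def
proof (rule the_equality)
  show "(\<forall>T. T \<notin> Pn n \<longrightarrow> c0 \<gamma> a n T = 0) \<and>
    (\<forall>U. trunc \<gamma> n U = (\<Sum>T\<in>Pn n. c0 \<gamma> a n T * epow (xminus a) T U))"
    using c0_works by (auto simp: c0_def)
next
  fix c assume c: "(\<forall>T. T \<notin> Pn n \<longrightarrow> c T = 0) \<and>
    (\<forall>U. trunc \<gamma> n U = (\<Sum>T\<in>Pn n. c T * epow (xminus a) T U))"
  let ?d = "\<lambda>T. c T - c0 \<gamma> a n T"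
  have "?d = (\<lambda>_. 0)"
  proof (rule unique_coeffs)
    show "\<forall>T. T \<notin> Pn n \<longrightarrow> ?d T = 0" using c by (simp add: c0_def)
    show "\<forall>U. (\<Sum>T\<in>Pn n. ?d T * epow (xminus a) T U) = 0"
    proof
      fix U
      have "(\<Sum>T\<in>Pn n. ?d T * epow (xminus a) T U) = (\<Sum>T\<in>Pn n. c T * epow (xminus a) T U)
           - (\<Sum>T\<in>Pn n. c0 \<gamma> a n T * epow (xminus a) T U)"
        by (simp add: left_diff_distrib sum_subtractf)
      then show "(\<Sum>T\<in>Pn n. ?d T * epow (xminus a) T U) = 0" using c c0_works[of \<gamma> n U a] by simp
    qed
  qed
  show "c = c0 \<gamma> a n"
  proof (rule ext)
    fix T from fun_cong[OF \<open>?d = (\<lambda>_. 0)\<close>, of T] show "c T = c0 \<gamma> a n T" by simp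
  qed
qed



lemma sum_Pow_binom:
  fixes s t :: real
  assumes "finite A"
  shows "(\<Sum>I\<in>Pow A. s ^ card I * t ^ (card A - card I)) = (s + t) ^ card A"
  using assms
proof (induction A rule: finite_induct)
  case empty then show ?case by simp
next
  case (insert x A)
  have fPA: "finite (Pow A)" using insert by simp
  have disj: "Pow A \<inter> insert x ` Pow A = {}" using insert by auto
  have inj: "inj_on (insert x) (Pow A)"
  proof (rule inj_onI)
    fix I J assume I: "I \<in> Pow A" and J: "J \<in> Pow A" and e: "insert x I = insert x J"
    have "x \<notin> I" "x \<notin> J" using I J insert.hyps(2) by auto
    then have "I = insert x I - {x}" "J = insert x J - {x}" by auto
    then show "I = J" using e by simp
  qed
  have cI: "\<And>I. I \<in> Pow A \<Longrightarrow> card I \<le> card A" using insert by (simp add: card_mono)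
  have cIx: "\<And>I. I \<in> Pow A \<Longrightarrow> card (insert x I) = Suc (card I)"
    using insert by (metis PowD finite_subset card_insert_disjoint subsetD)
  have "(\<Sum>I\<in>Pow (insert x A). s ^ card I * t ^ (card (insert x A) - card I))
      = (\<Sum>I\<in>Pow A. s ^ card I * t ^ (Suc (card A) - card I))
        + (\<Sum>I\<in>insert x ` Pow A. s ^ card I * t ^ (Suc (card A) - card I))"
    unfolding Pow_insert using insert fPA disj by (simp add: sum.union_disjoint)
  also have "(\<Sum>I\<in>insert x ` Pow A. s ^ card I * t ^ (Suc (card A) - card I))
      = (\<Sum>I\<in>Pow A. s ^ card (insert x I) * t ^ (Suc (card A) - card (insert x I)))"
    by (simp add: sum.reindex[OF inj])
  also have "\<dots> = s * (\<Sum>I\<in>Pow A. s ^ card I * t ^ (card A - card I))"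
    by (subst sum_distrib_left, intro sum.cong refl) (simp add: cIx)
  also have "(\<Sum>I\<in>Pow A. s ^ card I * t ^ (Suc (card A) - card I))
      = t * (\<Sum>I\<in>Pow A. s ^ card I * t ^ (card A - card I))"
    by (subst sum_distrib_left, intro sum.cong refl) (simp add: Suc_diff_le cI)
  finally show ?case using insert by (simp add: insert.IH algebra_simps)
qed

lemma pbinom_ineq:
  fixes s t :: real
  assumes U: "U \<in> Ptrees" and F: "finite F" and st: "0 \<le> s" "0 \<le> t"
  shows "(\<Sum>T\<in>F. of_nat (pbinom U T) * (s ^ deg T * t ^ (deg U - deg T))) \<le> (s + t) ^ deg U"
proof -
  let ?P = "F \<union> contraction U ` Pow {..<deg U}"
  have fP: "finite ?P" using F by simp
  have "(\<Sum>T\<in>F. of_nat (pbinom U T) * (s ^ deg T * t ^ (deg U - deg T)))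
      \<le> (\<Sum>T\<in>?P. of_nat (pbinom U T) * (s ^ deg T * t ^ (deg U - deg T)))"
    using fP st by (intro sum_mono2) auto
  also have "\<dots> = (\<Sum>I\<in>Pow {..<deg U}. s ^ deg (contraction U I) * t ^ (deg U - deg (contraction U I)))"
    by (rule pbinom_group[OF U fP]) auto
  also have "\<dots> = (\<Sum>I\<in>Pow {..<deg U}. s ^ card I * t ^ (card {..<deg U} - card I))"
    by (intro sum.cong refl) (simp add: deg_contraction)
  also have "\<dots> = (s + t) ^ deg U"
    by (subst sum_Pow_binom) auto
  finally show ?thesis .
qed

lemma has_sum_sum_fin:
  fixes g :: "'i \<Rightarrow> 'a \<Rightarrow> real"
  assumes "finite F" "\<forall>i\<in>F. (g i has_sum s i) A"
  shows "((\<lambda>x. \<Sum>i\<in>F. g i x) has_sum (\<Sum>i\<in>F. s i)) A"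
  using assms
proof (induction F rule: finite_induct)
  case empty then show ?case by simp
next
  case (insert i F)
  then show ?case by (simp add: has_sum_add)
qed

lemma tendsto_Pn:
  assumes "f summable_on Ptrees"
  shows "(\<lambda>n. sum f (Pn n)) \<longlonglongrightarrow> infsum f Ptrees"
proof -
  have h: "(sum f \<longlongrightarrow> infsum f Ptrees) (finite_subsets_at_top Ptrees)"
    using assms has_sum_def has_sum_infsum by blast
  have "filterlim Pn (finite_subsets_at_top Ptrees) sequentially"
    unfolding filterlim_finite_subsets_at_top
  proof (intro allI impI)
    fix X assume X: "finite X \<and> X \<subseteq> Ptrees"
    show "\<forall>\<^sub>F y in sequentially. finite (Pn y) \<and> X \<subseteq> Pn y \<and> Pn y \<subseteq> Ptrees"
      unfolding eventually_sequentially
    proof (intro exI allI impI)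
      fix n assume n: "(\<Sum>T\<in>X. deg T) \<le> n"
      have "X \<subseteq> Pn n"
      proof
        fix T assume "T \<in> X"
        then have "deg T \<le> (\<Sum>T\<in>X. deg T)" using X by (intro member_le_sum) auto
        then show "T \<in> Pn n" using n X \<open>T \<in> X\<close> by (auto simp: Pn_def)
      qed
      then show "finite (Pn n) \<and> X \<subseteq> Pn n \<and> Pn n \<subseteq> Ptrees" using finite_Pn Pn_sub by auto
    qed
  qed
  from filterlim_compose[OF h this] show ?thesis by simp
qed

definition SR :: "(ptree option \<Rightarrow> complex) \<Rightarrow> real \<Rightarrow> bool" where
  "SR \<gamma> \<rho> \<longleftrightarrow> (\<lambda>T. norm (\<gamma> T) * \<rho> ^ deg T) summable_on Ptrees"

lemma rad_obtain:
  assumes "ereal x < rad \<gamma>"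
  shows "\<exists>\<rho>. 0 \<le> \<rho> \<and> SR \<gamma> \<rho> \<and> x < \<rho>"
  using assms unfolding rad_def SR_def less_Sup_iff by auto

lemma rad_ge:
  assumes "0 \<le> \<rho>" "SR \<gamma> \<rho>"
  shows "ereal \<rho> \<le> rad \<gamma>"
  unfolding rad_def using assms by (intro Sup_upper) (auto simp: SR_def)

lemma SR_mono:
  assumes "SR \<gamma> \<rho>'" "0 \<le> \<rho>" "\<rho> \<le> \<rho>'"
  shows "SR \<gamma> \<rho>"
  using assms(1) unfolding SR_def
proof (rule summable_on_comparison_test)
  fix T show "norm (\<gamma> T) * \<rho> ^ deg T \<le> norm (\<gamma> T) * \<rho>' ^ deg T"
    using assms by (intro mult_left_mono power_mono) auto
  show "0 \<le> norm (\<gamma> T) * \<rho> ^ deg T" using assms by simp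
qed

lemma norm_term:
  fixes \<gamma> :: "ptree option \<Rightarrow> complex" and a :: complex
  shows "norm (\<gamma> U * of_nat (pbinom U T) * a ^ (deg U - deg T)) = norm (\<gamma> U) * of_nat (pbinom U T) * norm a ^ (deg U - deg T)"
  by (simp only: norm_mult norm_power norm_of_nat)

lemma summable_terms:
  assumes "SR \<gamma> \<rho>'" "norm a < \<rho>'" "T \<in> Ptrees"
  shows "(\<lambda>U. \<gamma> U * of_nat (pbinom U T) * a ^ (deg U - deg T)) summable_on Ptrees"
proof -
  let ?e = "\<rho>' - norm a"
  have e: "0 < ?e" using assms by simp
  have "(\<lambda>U. norm (\<gamma> U * of_nat (pbinom U T) * a ^ (deg U - deg T))) summable_on Ptrees"
  proof (rule summable_on_comparison_test)
    show "(\<lambda>U. norm (\<gamma> U) * \<rho>' ^ deg U * (1 / ?e ^ deg T)) summable_on Ptrees"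
      using assms(1) unfolding SR_def by (rule summable_on_cmult_left)
  next
    fix U assume U: "U \<in> Ptrees"
    have "of_nat (pbinom U T) * (?e ^ deg T * norm a ^ (deg U - deg T)) \<le> (?e + norm a) ^ deg U"
      using pbinom_ineq[OF U, of "{T}" ?e "norm a"] e by simp
    then have "of_nat (pbinom U T) * norm a ^ (deg U - deg T) \<le> \<rho>' ^ deg U / ?e ^ deg T"
      using e by (simp add: field_simps)
    then have "norm (\<gamma> U) * (of_nat (pbinom U T) * norm a ^ (deg U - deg T)) \<le> norm (\<gamma> U) * (\<rho>' ^ deg U / ?e ^ deg T)"
      by (intro mult_left_mono) auto
    moreover have "norm (\<gamma> U * of_nat (pbinom U T) * a ^ (deg U - deg T)) = norm (\<gamma> U) * (of_nat (pbinom U T) * norm a ^ (deg U - deg T))"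
      unfolding norm_term by (simp only: mult.assoc)
    moreover have "norm (\<gamma> U) * (\<rho>' ^ deg U / ?e ^ deg T) = norm (\<gamma> U) * \<rho>' ^ deg U * (1 / ?e ^ deg T)"
      by simp
    ultimately show "norm (\<gamma> U * of_nat (pbinom U T) * a ^ (deg U - deg T)) \<le> norm (\<gamma> U) * \<rho>' ^ deg U * (1 / ?e ^ deg T)"
      by simp
    show "0 \<le> norm (\<gamma> U * of_nat (pbinom U T) * a ^ (deg U - deg T))" by simp
  qed
  then show ?thesis by (rule summable_on_iff_abs_summable_on_complex[THEN iffD2])
qed


lemma gamma_summable:
  assumes SRa: "SR \<gamma> (\<rho> + norm a)" and r: "0 \<le> \<rho>"
    and summ: "\<forall>T\<in>Ptrees. (\<lambda>U. \<gamma> U * of_nat (pbinom U T) * a ^ (deg U - deg T)) summable_on Ptrees"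
  shows "SR (gamma_at \<gamma> a) \<rho>"
  unfolding SR_def
proof (rule nonneg_bdd_above_summable_on)
  fix T show "0 \<le> norm (gamma_at \<gamma> a T) * \<rho> ^ deg T" using r by simp
next
  let ?B = "infsum (\<lambda>U. norm (\<gamma> U) * (\<rho> + norm a) ^ deg U) Ptrees"
  let ?h = "\<lambda>T U. norm (\<gamma> U) * of_nat (pbinom U T) * norm a ^ (deg U - deg T) * \<rho> ^ deg T"
  have hs: "(?h T) summable_on Ptrees" if T: "T \<in> Ptrees" for T
  proof -
    have "(\<lambda>U. \<gamma> U * of_nat (pbinom U T) * a ^ (deg U - deg T)) summable_on Ptrees"
      using summ T by blast
    then have "(\<lambda>U. norm (\<gamma> U * of_nat (pbinom U T) * a ^ (deg U - deg T))) summable_on Ptrees"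
      by (rule summable_on_iff_abs_summable_on_complex[THEN iffD1])
    then show ?thesis by (simp add: norm_term summable_on_cmult_left)
  qed
  have bnd1: "norm (gamma_at \<gamma> a T) * \<rho> ^ deg T \<le> infsum (?h T) Ptrees" if T: "T \<in> Ptrees" for T
  proof -
    have "(\<lambda>U. \<gamma> U * of_nat (pbinom U T) * a ^ (deg U - deg T)) summable_on Ptrees"
      using summ T by blast
    then have ab: "(\<lambda>U. norm (\<gamma> U * of_nat (pbinom U T) * a ^ (deg U - deg T))) summable_on Ptrees"
      by (rule summable_on_iff_abs_summable_on_complex[THEN iffD1])
    have "norm (gamma_at \<gamma> a T) \<le> infsum (\<lambda>U. norm (\<gamma> U * of_nat (pbinom U T) * a ^ (deg U - deg T))) Ptrees"
      unfolding gamma_at_def by (rule norm_infsum_bound[OF ab])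
    also have "\<dots> = infsum (\<lambda>U. norm (\<gamma> U) * of_nat (pbinom U T) * norm a ^ (deg U - deg T)) Ptrees"
      by (simp add: norm_term)
    finally have "norm (gamma_at \<gamma> a T) * \<rho> ^ deg T \<le>
        infsum (\<lambda>U. norm (\<gamma> U) * of_nat (pbinom U T) * norm a ^ (deg U - deg T)) Ptrees * \<rho> ^ deg T"
      using r by (intro mult_right_mono) auto
    also have "\<dots> = infsum (?h T) Ptrees"
      by (rule infsum_cmult_left'[symmetric])
    finally show ?thesis .
  qed
  show "bdd_above (sum (\<lambda>T. norm (gamma_at \<gamma> a T) * \<rho> ^ deg T) ` {F. F \<subseteq> Ptrees \<and> finite F})"
  proof (rule bdd_aboveI2)
    fix F assume "F \<in> {F. F \<subseteq> Ptrees \<and> finite F}"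
    then have F: "F \<subseteq> Ptrees" "finite F" by auto
    have hsum: "((\<lambda>U. \<Sum>T\<in>F. ?h T U) has_sum (\<Sum>T\<in>F. infsum (?h T) Ptrees)) Ptrees"
      using F hs by (intro has_sum_sum_fin) (auto intro: has_sum_infsum)
    have "(\<Sum>T\<in>F. norm (gamma_at \<gamma> a T) * \<rho> ^ deg T) \<le> (\<Sum>T\<in>F. infsum (?h T) Ptrees)"
      using F bnd1 by (intro sum_mono) auto
    also have "\<dots> = infsum (\<lambda>U. \<Sum>T\<in>F. ?h T U) Ptrees"
      using hsum by (simp add: infsumI)
    also have "\<dots> \<le> ?B"
    proof (rule infsum_mono)
      show "(\<lambda>U. \<Sum>T\<in>F. ?h T U) summable_on Ptrees"
        using hsum by (rule has_sum_imp_summable)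
      show "(\<lambda>U. norm (\<gamma> U) * (\<rho> + norm a) ^ deg U) summable_on Ptrees"
        using SRa by (simp add: SR_def)
    next
      fix U assume U: "U \<in> Ptrees"
      have "(\<Sum>T\<in>F. ?h T U) = norm (\<gamma> U) * (\<Sum>T\<in>F. of_nat (pbinom U T) * (\<rho> ^ deg T * norm a ^ (deg U - deg T)))"
        by (simp add: sum_distrib_left mult_ac)
      also have "\<dots> \<le> norm (\<gamma> U) * (\<rho> + norm a) ^ deg U"
        using pbinom_ineq[OF U F(2), of \<rho> "norm a"] r by (intro mult_left_mono) auto
      finally show "(\<Sum>T\<in>F. ?h T U) \<le> norm (\<gamma> U) * (\<rho> + norm a) ^ deg U" .
    qed
    finally show "(\<Sum>T\<in>F. norm (gamma_at \<gamma> a T) * \<rho> ^ deg T) \<le> ?B" .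
  qed
qed

lemma rad_bound:
  assumes H: "\<And>\<rho>. 0 \<le> \<rho> \<Longrightarrow> ereal (\<rho> + norm a) < rad \<gamma> \<Longrightarrow> SR g \<rho>"
    and a: "ereal (norm a) < rad \<gamma>"
  shows "rad \<gamma> - ereal (norm a) \<le> rad g"
proof (rule ccontr)
  have r0: "ereal 0 \<le> rad g" using H[of 0] a rad_ge by simp
  assume "\<not> ?thesis"
  then have lt: "rad g < rad \<gamma> - ereal (norm a)" by simp
  obtain q where q: "rad g < q" "q < rad \<gamma> - ereal (norm a)" using dense[OF lt] by blast
  have q0: "0 < q" using r0 q(1) zero_ereal_def order_le_less_trans by metis
  have qi: "q \<noteq> \<infinity>" using q(2) by auto
  define \<rho> where "\<rho> = real_of_ereal q"
  have qe: "q = ereal \<rho>" unfolding \<rho>_def using q0 qi by (intro ereal_real'[symmetric]) auto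
  have \<rho>0: "0 \<le> \<rho>" using q0 qe by simp
  have "ereal (\<rho> + norm a) < rad \<gamma>"
  proof (cases "rad \<gamma>")
    case (real r) then show ?thesis using q(2) qe by simp
  next
    case PInf then show ?thesis by simp
  next
    case MInf then show ?thesis using a by simp
  qed
  then have "SR g \<rho>" using H \<rho>0 by blast
  then have "ereal \<rho> \<le> rad g" using \<rho>0 rad_ge by blast
  then show False using q(1) qe by simp
qed

lemma pbinom_None:
  assumes U: "U \<in> Ptrees"
  shows "pbinom U None = 1"
proof -
  have "{I. I \<subseteq> {..<deg U} \<and> contraction U I = None} = {{}}"
  proof (intro equalityI subsetI)
    fix I :: "nat set" assume "I \<in> {I. I \<subseteq> {..<deg U} \<and> contraction U I = None}"
    then have I: "I \<subseteq> {..<deg U}" "contraction U I = None" by auto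
    then have "card I = 0" using deg_contraction[OF I(1)] by (simp add: deg_def)
    moreover have "finite I" using I(1) finite_subset by blast
    ultimately show "I \<in> {{}}" by simp
  next
    fix I :: "nat set" assume "I \<in> {{}}"
    then have I: "I = {}" by simp
    have "deg (contraction U {}) = 0" using deg_contraction[of "{}" U] by simp
    then have "contraction U {} = None" using deg_Ptrees_pos[OF contraction_Ptrees] by fastforce
    then show "I \<in> {I. I \<subseteq> {..<deg U} \<and> contraction U I = None}" using I by simp
  qed
  then show ?thesis by (simp add: pbinom_def)
qed

lemma pbinom_Lf:
  assumes U: "U \<in> Ptrees"
  shows "pbinom U (Some Lf) = deg U"
proof -
  have "{I. I \<subseteq> {..<deg U} \<and> contraction U I = Some Lf} = {I. I \<subseteq> {..<deg U} \<and> card I = 1}"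
  proof (intro Collect_cong conj_cong refl)
    fix I assume I: "I \<subseteq> {..<deg U}"
    have "contraction U I = Some Lf \<longleftrightarrow> deg (contraction U I) = 1"
      using deg_Ptrees_1[OF contraction_Ptrees] by simp
    then show "contraction U I = Some Lf \<longleftrightarrow> card I = 1" using deg_contraction[OF I] by simp
  qed
  then show ?thesis by (simp add: pbinom_def n_subsets)
qed

theorem proposition2p2:
  fixes \<gamma> :: "ptree option \<Rightarrow> complex" and a :: complex
  assumes "0 < rad \<gamma>" and "ereal (norm a) < rad \<gamma>"
  shows "(\<forall>T\<in>Ptrees.
            (\<lambda>U. \<gamma> U * of_nat (pbinom U T) * a ^ (deg U - deg T)) summable_on Ptrees \<and>
            (\<lambda>n. expand_coeffs a n (trunc \<gamma> n) T) \<longlonglongrightarrow> gamma_at \<gamma> a T)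
       \<and> rad (gamma_at \<gamma> a) \<ge> rad \<gamma> - ereal (norm a)
       \<and> gamma_at \<gamma> a None = (\<Sum>\<^sub>\<infinity>U\<in>Ptrees. \<gamma> U * a ^ deg U)
       \<and> gamma_at \<gamma> a (Some Lf) =
           (\<Sum>\<^sub>\<infinity>U\<in>{U\<in>Ptrees. 1 \<le> deg U}. \<gamma> U * of_nat (deg U) * a ^ (deg U - 1))"
proof -
  obtain \<rho>' where \<rho>': "0 \<le> \<rho>'" "SR \<gamma> \<rho>'" "norm a < \<rho>'" using rad_obtain[OF assms(2)] by auto
  have summ: "\<forall>T\<in>Ptrees. (\<lambda>U. \<gamma> U * of_nat (pbinom U T) * a ^ (deg U - deg T)) summable_on Ptrees"
    using summable_terms[OF \<rho>'(2,3)] by auto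
  have conv: "(\<lambda>n. expand_coeffs a n (trunc \<gamma> n) T) \<longlonglongrightarrow> gamma_at \<gamma> a T" if T: "T \<in> Ptrees" for T
  proof -
    let ?f = "\<lambda>U. \<gamma> U * of_nat (pbinom U T) * a ^ (deg U - deg T)"
    have lim: "(\<lambda>n. sum ?f (Pn n)) \<longlonglongrightarrow> gamma_at \<gamma> a T"
      unfolding gamma_at_def using tendsto_Pn summ T by blast
    have ev: "eventually (\<lambda>n. sum ?f (Pn n) = expand_coeffs a n (trunc \<gamma> n) T) sequentially"
      unfolding eventually_sequentially
    proof (intro exI allI impI)
      fix n assume "deg T \<le> n"
      then have "T \<in> Pn n" using T by (simp add: Pn_def)
      then show "sum ?f (Pn n) = expand_coeffs a n (trunc \<gamma> n) T"
        by (simp add: expand_coeffs_eq c0_def)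
    qed
    show ?thesis by (rule Lim_transform_eventually[OF lim ev])
  qed
  have radb: "rad \<gamma> - ereal (norm a) \<le> rad (gamma_at \<gamma> a)"
  proof (rule rad_bound[OF _ assms(2)])
    fix \<rho> :: real assume r: "0 \<le> \<rho>" "ereal (\<rho> + norm a) < rad \<gamma>"
    obtain \<rho>'' where \<rho>'': "0 \<le> \<rho>''" "SR \<gamma> \<rho>''" "\<rho> + norm a < \<rho>''" using rad_obtain[OF r(2)] by auto
    have "SR \<gamma> (\<rho> + norm a)" using SR_mono[OF \<rho>''(2)] \<rho>''(3) r(1) by simp
    then show "SR (gamma_at \<gamma> a) \<rho>" using gamma_summable r(1) summ by blast
  qed
  have g0: "gamma_at \<gamma> a None = (\<Sum>\<^sub>\<infinity>U\<in>Ptrees. \<gamma> U * a ^ deg U)"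
    unfolding gamma_at_def by (intro infsum_cong) (simp add: pbinom_None deg_def)
  have g1: "gamma_at \<gamma> a (Some Lf) =
           (\<Sum>\<^sub>\<infinity>U\<in>{U\<in>Ptrees. 1 \<le> deg U}. \<gamma> U * of_nat (deg U) * a ^ (deg U - 1))"
    unfolding gamma_at_def
  proof (rule infsum_cong_neutral)
    fix U assume "U \<in> Ptrees - {U \<in> Ptrees. 1 \<le> deg U}"
    then have "U \<in> Ptrees" "deg U = 0" by auto
    then show "\<gamma> U * of_nat (pbinom U (Some Lf)) * a ^ (deg U - deg (Some Lf)) = 0"
      by (simp add: pbinom_Lf)
  next
    fix U assume "U \<in> Ptrees \<inter> {U \<in> Ptrees. 1 \<le> deg U}"
    then show "\<gamma> U * of_nat (pbinom U (Some Lf)) * a ^ (deg U - deg (Some Lf)) =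
        \<gamma> U * of_nat (deg U) * a ^ (deg U - 1)"
      by (simp add: pbinom_Lf deg_def)
  qed auto
  show ?thesis using summ conv radb g0 g1 by auto
qed


end
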